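(* Let $G=(V,E)$ be an undirected graph on $n$ nodes with edge weights $w:E\to\mathbb{R}^+$, let $0<\epsilon<1$, and let $H_0$ and $H$ be as in the construction described in the context. For any two nodes $s,t\in V$ such that the canonical shortest path $\pi_G(s,t)$ is missing more than $\mu^3/n$ edges in $H_0$, we have $\texttt{dist}_H(s,t)\le\texttt{dist}_G(s,t)+4W(s,t)$ with probability at least $1-\frac{1}{n^3}$.
   Context: Let $\mu=\lceil n^{2/5}\log^{1/5}n\rceil$. $\texttt{dist}$ denotes weighted distance, $w(P)$ the total weight of a path $P$, $\pi_G(u,v)$ a fixed (canonical) shortest $u\leadsto v$ path in $G$, $W=\max_{e\in E}w(e)$, and $W(s,t)$ the maximum edge weight on $\pi_G(s,t)$. $\Gamma_{H_0}(x)$ is $x$ together with its neighbors in $H_0$. A $\mu$-lightweight initialization of $G$ is the subgraph obtained by selecting, for every node, its $\mu$ lightest incident edges (all of them if it has fewer), ties broken arbitrarily. Weighted weak CSSSP with error: given gray edges $E_g$, source $s$, $w$, $\epsilon$, positive integer $g$; an $s\leadsto t$ path is $g$-short if it has fewer than $g$ gray edges and has the form $(s,s')\circ\pi_G(s',t')\circ(t',t)$ with $\pi_G(s',t')$ a shortest path and $(s,s'),(t',t)$ edges (or empty). A solution outputs for every $t$ an $s\leadsto t$ path $P(s,t)$ such that whenever a $g$-short $s\leadsto t$ path exists, $P(s,t)$ has at most $5g/\epsilon$ gray edges and $w(P(s,t))<w(P_g(s,t))+\epsilon W$ for every $s\leadsto t$ path $P_g(s,t)$ with fewer than $g$ gray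 edges (otherwise arbitrary). Construction: (1) Let $H_0=(V,E')$ be a $\mu$-lightweight initialization of $G$. (2) Sample $S_2$ by including each node independently with probability $1/\mu$; for each node $x$ with $(\{x\}\cup\Gamma_{H_0}(x))\cap S_2=\varnothing$, add all edges incident to $x$ to $E'$. (3) Sample $S_1$ by including each node independently with probability $9\mu/n$; for each $x\in S_1$ add to $E'$ the edges of a shortest-path tree of $G$ rooted at $x$ spanning $V$. (4) For each $x_1\in S_2$, solve weighted weak CSSSP with error on $G$ with source $x_1$, $g=\mu^3/n+2$, gray edges $E\setminus E'$ (the current $E'$), and error parameter $\epsilon$, obtaining paths $P(x_1,x_2)$; add the edges of $P(x_1,x_2)$ to $E'$ for every $x_2\in S_2$. Output $H=(V,E')$. The probability is over the random samples. *)

theory Defs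
  imports "HOL-Probability.Probability" "HOL-Probability.Product_PMF"
begin

definition simple_graph :: "'a set \<Rightarrow> 'a set set \<Rightarrow> bool" where
  "simple_graph V E \<longleftrightarrow> finite V \<and> (\<forall>e\<in>E. \<exists>u v. e = {u, v} \<and> u \<noteq> v \<and> u \<in> V \<and> v \<in> V)"

fun edges_of :: "'a list \<Rightarrow> 'a set list" where
  "edges_of (x # y # r) = {x, y} # edges_of (y # r)"
| "edges_of _ = []"

definition walk :: "'a set \<Rightarrow> 'a set set \<Rightarrow> 'a list \<Rightarrow> bool" where
  "walk V E p \<longleftrightarrow> p \<noteq> [] \<and> set p \<subseteq> V \<and> set (edges_of p) \<subseteq> E"

definition walk_from_to :: "'a set \<Rightarrow> 'a set set \<Rightarrow> 'a list \<Rightarrow> 'a \<Rightarrow> 'a \<Rightarrow> bool" where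
  "walk_from_to V E p u v \<longleftrightarrow> walk V E p \<and> hd p = u \<and> last p = v"

definition walk_weight :: "('a set \<Rightarrow> real) \<Rightarrow> 'a list \<Rightarrow> real" where
  "walk_weight w p = sum_list (map w (edges_of p))"

text \<open>Weighted distance in (V,E); \<infinity> if no path.\<close>
definition dist :: "'a set \<Rightarrow> 'a set set \<Rightarrow> ('a set \<Rightarrow> real) \<Rightarrow> 'a \<Rightarrow> 'a \<Rightarrow> ereal" where
  "dist V E w u v = Inf {ereal (walk_weight w p) | p. walk_from_to V E p u v}"

definition connected_graph :: "'a set \<Rightarrow> 'a set set \<Rightarrow> bool" where
  "connected_graph V E \<longleftrightarrow> (\<forall>u\<in>V. \<forall>v\<in>V. \<exists>p. walk_from_to V E p u v)"

definition shortest_path :: "'a set \<Rightarrow> 'a set set \<Rightarrow> ('a set \<Rightarrow> real) \<Rightarrow> 'a list \<Rightarrow> 'a \<Rightarrow> 'a \<Rightarrow> bool" where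
  "shortest_path V E w p u v \<longleftrightarrow> walk_from_to V E p u v \<and> ereal (walk_weight w p) = dist V E w u v"

definition incident :: "'a set set \<Rightarrow> 'a \<Rightarrow> 'a set set" where
  "incident E x = {e \<in> E. x \<in> e}"

definition mu :: "nat \<Rightarrow> nat" where
  "mu n = nat \<lceil>real n powr (2/5) * (log 2 (real n)) powr (1/5)\<rceil>"

text \<open>E0 is the edge set of a k-lightweight initialization of (V,E): every node
  selects its k lightest incident edges (all if fewer), ties broken arbitrarily.\<close>
definition lightweight_init :: "'a set \<Rightarrow> 'a set set \<Rightarrow> ('a set \<Rightarrow> real) \<Rightarrow> nat \<Rightarrow> 'a set set \<Rightarrow> bool" where
  "lightweight_init V E w k E0 \<longleftrightarrow>
     (\<exists>L. (\<forall>v\<in>V. L v \<subseteq> incident E v \<and> card (L v) = min k (card (incident E v)) \<and>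
                 (\<forall>e\<in>L v. \<forall>f\<in>incident E v - L v. w e \<le> w f))
          \<and> E0 = (\<Union>v\<in>V. L v))"

definition Gamma :: "'a set set \<Rightarrow> 'a \<Rightarrow> 'a set" where
  "Gamma E0 x = {x} \<union> {y. {x, y} \<in> E0}"

definition is_spt :: "'a set \<Rightarrow> 'a set set \<Rightarrow> ('a set \<Rightarrow> real) \<Rightarrow> 'a \<Rightarrow> 'a set set \<Rightarrow> bool" where
  "is_spt V E w x T \<longleftrightarrow> T \<subseteq> E \<and> connected_graph V T \<and> card T = card V - 1 \<and>
     (\<forall>v\<in>V. dist V T w x v = dist V E w x v)"

definition gray_count :: "'a set set \<Rightarrow> 'a list \<Rightarrow> nat" where
  "gray_count Eg p = length (filter (\<lambda>e. e \<in> Eg) (edges_of p))"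

definition Wmax :: "'a set set \<Rightarrow> ('a set \<Rightarrow> real) \<Rightarrow> real" where
  "Wmax E w = Max (w ` E)"

definition Wpath :: "('a set \<Rightarrow> real) \<Rightarrow> 'a list \<Rightarrow> real" where
  "Wpath w p = Max (w ` set (edges_of p))"

definition g_short :: "'a set \<Rightarrow> 'a set set \<Rightarrow> ('a \<Rightarrow> 'a \<Rightarrow> 'a list) \<Rightarrow> 'a set set \<Rightarrow> real
     \<Rightarrow> 'a \<Rightarrow> 'a \<Rightarrow> 'a list \<Rightarrow> bool" where
  "g_short V E cp Eg g s t q \<longleftrightarrow> walk_from_to V E q s t \<and> real (gray_count Eg q) < g \<and>
     (\<exists>s' t'. (s' = s \<or> {s, s'} \<in> E) \<and> (t' = t \<or> {t', t} \<in> E) \<and>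
        q = (if s' = s then [] else [s]) @ cp s' t' @ (if t' = t then [] else [t]))"

text \<open>P (a function of the target t) solves weighted weak CSSSP with error for
  gray edges Eg, source s, weights w, error eps and parameter g.\<close>
definition weak_csssp_sol :: "'a set \<Rightarrow> 'a set set \<Rightarrow> ('a set \<Rightarrow> real) \<Rightarrow> ('a \<Rightarrow> 'a \<Rightarrow> 'a list)
     \<Rightarrow> 'a set set \<Rightarrow> 'a \<Rightarrow> real \<Rightarrow> real \<Rightarrow> ('a \<Rightarrow> 'a list) \<Rightarrow> bool" where
  "weak_csssp_sol V E w cp Eg s eps g P \<longleftrightarrow>
     (\<forall>t\<in>V. walk_from_to V E (P t) s t \<and>
        ((\<exists>q. g_short V E cp Eg g s t q) \<longrightarrow>
           real (gray_count Eg (P t)) \<le> 5 * g / eps \<and>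
           (\<forall>q. walk_from_to V E q s t \<and> real (gray_count Eg q) < g \<longrightarrow>
                walk_weight w (P t) < walk_weight w q + eps * Wmax E w)))"

definition sample_set :: "'a set \<Rightarrow> real \<Rightarrow> 'a set pmf" where
  "sample_set V p = map_pmf (\<lambda>f. {x \<in> V. f x}) (Pi_pmf V False (\<lambda>_. bernoulli_pmf p))"

text \<open>The edge set of H as a function of the samples S1, S2 and of the (arbitrary but
  fixed) choices: H0 edges E0, shortest-path trees spt, CSSSP solver sol
  (sol Eg x1 is the solution for gray edges Eg and source x1).\<close>
definition H_edges1 :: "'a set \<Rightarrow> 'a set set \<Rightarrow> 'a set set \<Rightarrow> 'a set \<Rightarrow> 'a set set" where
  "H_edges1 V E E0 S2 = E0 \<union> \<Union>{incident E x | x. x \<in> V \<and> Gamma E0 x \<inter> S2 = {}}"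

definition H_edges2 :: "'a set \<Rightarrow> 'a set set \<Rightarrow> 'a set set \<Rightarrow> ('a \<Rightarrow> 'a set set) \<Rightarrow> 'a set \<Rightarrow> 'a set \<Rightarrow> 'a set set" where
  "H_edges2 V E E0 spt S1 S2 = H_edges1 V E E0 S2 \<union> \<Union>(spt ` S1)"

definition H_edges :: "'a set \<Rightarrow> 'a set set \<Rightarrow> 'a set set \<Rightarrow> ('a \<Rightarrow> 'a set set)
     \<Rightarrow> ('a set set \<Rightarrow> 'a \<Rightarrow> 'a \<Rightarrow> 'a list) \<Rightarrow> 'a set \<Rightarrow> 'a set \<Rightarrow> 'a set set" where
  "H_edges V E E0 spt sol S1 S2 =
     (let E2 = H_edges2 V E E0 spt S1 S2
      in E2 \<union> \<Union>{set (edges_of (sol (E - E2) x1 x2)) | x1 x2. x1 \<in> S2 \<and> x2 \<in> S2})"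

end

theory Submission
  imports Defs
begin

lemma edges_of_Cons2: "edges_of (x # xs) = (case xs of [] \<Rightarrow> [] | y # _ \<Rightarrow> {x, y} # edges_of xs)"
  by (cases xs) auto

lemma length_edges_of: "length (edges_of xs) = length xs - 1"
  by (induction xs rule: edges_of.induct) auto

lemma nth_edges_of: "Suc i < length xs \<Longrightarrow> edges_of xs ! i = {xs ! i, xs ! Suc i}"
proof (induction xs arbitrary: i rule: edges_of.induct)
  case (1 x y r)
  then show ?case by (cases i) auto
qed auto

lemma edges_of_append_tl:
  "xs \<noteq> [] \<Longrightarrow> ys \<noteq> [] \<Longrightarrow> last xs = hd ys \<Longrightarrow> edges_of (xs @ tl ys) = edges_of xs @ edges_of ys"
proof (induction xs rule: edges_of.induct)
  case (1 x y r)
  then show ?case by simp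
next
qed (auto simp: edges_of_Cons2 neq_Nil_conv)

lemma edges_of_append_Cons:
  "xs \<noteq> [] \<Longrightarrow> edges_of (xs @ y # ys) = edges_of xs @ {last xs, y} # edges_of (y # ys)"
proof (induction xs rule: edges_of.induct)
  case (1 x y r)
  then show ?case by simp
qed auto

lemma edges_of_rev: "edges_of (rev xs) = rev (edges_of xs)"
proof (induction xs rule: edges_of.induct)
  case (1 x y r)
  have "edges_of (rev (x # y # r)) = edges_of (rev (y # r) @ [x])" by simp
  also have "\<dots> = edges_of (rev (y # r)) @ [{y, x}]"
    using edges_of_append_Cons[of "rev (y # r)" x "[]"] by simp
  finally show ?case using 1 by (simp add: insert_commute)
qed auto

lemma edges_of_take: "edges_of (take (Suc i) xs) = take i (edges_of xs)"
proof (induction xs arbitrary: i rule: edges_of.induct)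
  case (1 x y r)
  then show ?case by (cases i) auto
qed (auto simp: take_Suc)

lemma edges_of_drop: "edges_of (drop i xs) = drop i (edges_of xs)"
proof (induction xs arbitrary: i rule: edges_of.induct)
  case (1 x y r)
  then show ?case by (cases i) auto
qed (auto simp: drop_Cons' edges_of_Cons2 split: list.splits)

lemma comb_inner1:
  fixes P :: "nat \<Rightarrow> real" and m :: "nat \<Rightarrow> nat"
  assumes mono: "\<And>i j. i \<le> j \<Longrightarrow> P i \<le> P j"
    and sm: "\<And>c d. c < d \<Longrightarrow> d < k \<Longrightarrow> m c < m d"
    and "c < e" "e < d" "d < k"
  shows "P (Suc (m e)) - P (m e) \<le> P (m d) - P (Suc (m c))"
proof -
  have "Suc (m c) \<le> m e" using sm assms by (meson Suc_leI order.strict_trans)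
  moreover have "Suc (m e) \<le> m d" using sm assms by (simp add: Suc_leI)
  ultimately show ?thesis using mono[of "Suc (m c)" "m e"] mono[of "Suc (m e)" "m d"] by linarith
qed

lemma comb_inner2:
  fixes P :: "nat \<Rightarrow> real" and m :: "nat \<Rightarrow> nat"
  assumes mono: "\<And>i j. i \<le> j \<Longrightarrow> P i \<le> P j"
    and sm: "\<And>c d. c < d \<Longrightarrow> d < k \<Longrightarrow> m c < m d"
    and "c < e1" "e1 < e2" "e2 < d" "d < k"
  shows "(P (Suc (m e1)) - P (m e1)) + (P (Suc (m e2)) - P (m e2)) \<le> P (m d) - P (Suc (m c))"
proof -
  have "Suc (m c) \<le> m e1" using sm assms by (meson Suc_leI order.strict_trans)
  moreover have "Suc (m e1) \<le> m e2" using sm assms by (meson Suc_leI order.strict_trans)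
  moreover have "Suc (m e2) \<le> m d" using sm assms by (simp add: Suc_leI)
  ultimately show ?thesis using mono[of "Suc (m c)" "m e1"] mono[of "Suc (m e1)" "m e2"] mono[of "Suc (m e2)" "m d"] by linarith
qed

lemma comb_main:
  fixes P :: "nat \<Rightarrow> real" and m :: "nat \<Rightarrow> nat" and k :: nat
  assumes mono: "\<And>i j. i \<le> j \<Longrightarrow> P i \<le> P j"
    and sm: "\<And>c d. c < d \<Longrightarrow> d < k \<Longrightarrow> m c < m d"
    and pos: "\<And>c. c < k \<Longrightarrow> P (m c) < P (Suc (m c))"
    and om: "\<And>i. om i = P (Suc i) - P i"
    and f: "\<And>c. f c = (if c = k - 1 \<or> om (m c) \<le> om (m (Suc c)) then Suc (m c) else m (Suc c))"
    and R: "\<And>c. R c = (if c = k - 1 \<or> om (m c) \<le> om (m (Suc c)) then om (m c) else om (m (Suc c)))"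
    and cd: "c + 3 \<le> d" "d < k"
  shows "R c + R d < P (f d) - P (f c)"
proof -
  have ck: "c \<noteq> k - 1" "Suc c < k" "c + 2 < d" using cd by auto
  have posc: "\<And>e. e < k \<Longrightarrow> 0 < om (m e)" using pos om by (simp)
  have i1: "om (m e) \<le> P (m d) - P (Suc (m c))" if "c < e" "e < d" "d < k" for c e d
    using comb_inner1[OF mono sm that] om by simp
  have i2: "om (m e1) + om (m e2) \<le> P (m d) - P (Suc (m c))" if "c < e1" "e1 < e2" "e2 < d" "d < k" for c e1 e2 d
    using comb_inner2[OF mono sm that] om by simp
  show ?thesis
  proof (cases "om (m c) \<le> om (m (Suc c))")
    case bc: True
    show ?thesis
    proof (cases "d = k - 1 \<or> om (m d) \<le> om (m (Suc d))")
      case bd: True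
      have eqs: "f c = Suc (m c)" "R c = om (m c)" "f d = Suc (m d)" "R d = om (m d)"
        using f R bc bd by auto
      have "om (m (Suc c)) + om (m (Suc (Suc c))) \<le> P (m d) - P (Suc (m c))"
        using i2[of c "Suc c" "Suc (Suc c)" d] cd by auto
      moreover have "0 < om (m (Suc (Suc c)))" using posc cd by auto
      ultimately show ?thesis unfolding eqs using bc om[of "m d"] by linarith
    next
      case ad: False
      have dk: "Suc d < k" using ad cd by auto
      have eqs: "f c = Suc (m c)" "R c = om (m c)" "f d = m (Suc d)" "R d = om (m (Suc d))"
        using f R bc ad by auto
      have "om (m (Suc c)) + om (m d) \<le> P (m (Suc d)) - P (Suc (m c))"
        using i2[of c "Suc c" d "Suc d"] cd dk by auto
      moreover have "om (m (Suc d)) < om (m d)" using ad by auto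
      ultimately show ?thesis unfolding eqs using bc by linarith
    qed
  next
    case ac: False
    show ?thesis
    proof (cases "d = k - 1 \<or> om (m d) \<le> om (m (Suc d))")
      case bd: True
      have eqs: "f c = m (Suc c)" "R c = om (m (Suc c))" "f d = Suc (m d)" "R d = om (m d)"
        using f R ac ck bd by auto
      have "om (m (Suc (Suc c))) \<le> P (m d) - P (Suc (m (Suc c)))"
        using i1[of "Suc c" "Suc (Suc c)" d] cd by auto
      moreover have "0 < om (m (Suc (Suc c)))" using posc cd by auto
      ultimately show ?thesis unfolding eqs using om[of "m d"] om[of "m (Suc c)"] by linarith
    next
      case ad: False
      have dk: "Suc d < k" using ad cd by auto
      have eqs: "f c = m (Suc c)" "R c = om (m (Suc c))" "f d = m (Suc d)" "R d = om (m (Suc d))"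
        using f R ac ck ad by auto
      have "om (m d) \<le> P (m (Suc d)) - P (Suc (m (Suc c)))"
        using i1[of "Suc c" d "Suc d"] cd dk by auto
      moreover have "om (m (Suc d)) < om (m d)" using ad by auto
      ultimately show ?thesis unfolding eqs using om[of "m (Suc c)"] by linarith
    qed
  qed
qed

lemma walk_weight_append_tl:
  "xs \<noteq> [] \<Longrightarrow> ys \<noteq> [] \<Longrightarrow> last xs = hd ys \<Longrightarrow>
   walk_weight w (xs @ tl ys) = walk_weight w xs + walk_weight w ys"
  by (simp add: walk_weight_def edges_of_append_tl)

lemma walk_weight_rev: "walk_weight w (rev xs) = walk_weight w xs"
  by (simp add: walk_weight_def edges_of_rev rev_map[symmetric] sum_list_rev)

lemma walk_append_tl:
  assumes "walk V E xs" "walk V E ys" "last xs = hd ys"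
  shows "walk V E (xs @ tl ys)"
proof -
  have "xs \<noteq> []" "ys \<noteq> []" using assms by (auto simp: walk_def)
  moreover have "set (tl ys) \<subseteq> set ys" by (simp add: list.set_sel(2) subsetI \<open>ys \<noteq> []\<close>)
  ultimately show ?thesis using assms
    by (auto simp: walk_def edges_of_append_tl)
qed

lemma walk_from_to_append_tl:
  assumes "walk_from_to V E xs a b" "walk_from_to V E ys b c"
  shows "walk_from_to V E (xs @ tl ys) a c"
proof -
  have ne: "xs \<noteq> []" "ys \<noteq> []" using assms by (auto simp: walk_from_to_def walk_def)
  have "last (xs @ tl ys) = c"
  proof (cases "tl ys = []")
    case True
    then have "ys = [hd ys]" using ne by (cases ys) auto
    then show ?thesis using assms True by (auto simp: walk_from_to_def)
  next
    case False
    then show ?thesis using assms ne by (auto simp: walk_from_to_def last_tl)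
  qed
  moreover have "walk V E (xs @ tl ys)"
    using assms walk_append_tl[of V E xs ys] by (auto simp: walk_from_to_def)
  ultimately show ?thesis using assms ne by (auto simp: walk_from_to_def)
qed

lemma walk_rev: "walk V E xs \<Longrightarrow> walk V E (rev xs)"
  by (auto simp: walk_def edges_of_rev)

lemma walk_from_to_rev: "walk_from_to V E xs a b \<Longrightarrow> walk_from_to V E (rev xs) b a"
  unfolding walk_from_to_def using walk_rev by (auto simp: hd_rev last_rev)

lemma walk_mono: "E \<subseteq> E' \<Longrightarrow> walk V E p \<Longrightarrow> walk V E' p"
  by (auto simp: walk_def)

lemma dist_le_walk: "walk_from_to V E p u v \<Longrightarrow> dist V E w u v \<le> ereal (walk_weight w p)"
  unfolding dist_def by (rule Inf_lower) blast

lemma dist_lessE: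
  assumes "dist V E w u v < ereal c"
  obtains p where "walk_from_to V E p u v" "walk_weight w p < c"
  using assms unfolding dist_def by (auto simp: Inf_less_iff)

lemma last_take_Suc: "i < length xs \<Longrightarrow> last (take (Suc i) xs) = xs ! i"
  by (simp add: take_Suc_conv_app_nth)

lemma walk_take:
  assumes "walk V E xs" "i < length xs"
  shows "walk_from_to V E (take (Suc i) xs) (hd xs) (xs ! i)"
proof -
  have "set (take (Suc i) xs) \<subseteq> set xs" by (rule set_take_subset)
  moreover have "set (edges_of (take (Suc i) xs)) \<subseteq> set (edges_of xs)"
    by (simp add: edges_of_take set_take_subset)
  ultimately show ?thesis using assms
    by (auto simp: walk_from_to_def walk_def last_take_Suc)
qed

lemma walk_drop:
  assumes "walk V E xs" "i < length xs"
  shows "walk_from_to V E (drop i xs) (xs ! i) (last xs)"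
proof -
  have "set (drop i xs) \<subseteq> set xs" by (rule set_drop_subset)
  moreover have "set (edges_of (drop i xs)) \<subseteq> set (edges_of xs)"
    by (simp add: edges_of_drop set_drop_subset)
  ultimately show ?thesis using assms
    by (auto simp: walk_from_to_def walk_def hd_drop_conv_nth)
qed

lemma walk_weight_take_drop:
  assumes "i < length xs"
  shows "walk_weight w xs = walk_weight w (take (Suc i) xs) + walk_weight w (drop i xs)"
proof -
  have "take (Suc i) xs @ tl (drop i xs) = xs"
    by (metis append_take_drop_id drop_Suc tl_drop)
  moreover have "last (take (Suc i) xs) = hd (drop i xs)"
    using assms by (simp add: hd_drop_conv_nth last_take_Suc take_Suc_conv_app_nth)
  moreover have "take (Suc i) xs \<noteq> []" "drop i xs \<noteq> []" using assms by auto
  ultimately show ?thesis using walk_weight_append_tl by metis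
qed

lemma prefix_weight_mono:
  assumes nn: "\<forall>e\<in>set (edges_of xs). 0 \<le> w e" and "i \<le> j"
  shows "walk_weight w (take (Suc i) xs) \<le> walk_weight w (take (Suc j) xs)"
proof -
  define es where "es = edges_of xs"
  have "take j es = take i es @ take (j - i) (drop i es)"
    using assms(2) by (metis le_add_diff_inverse take_add)
  then have "sum_list (map w (take j es)) = sum_list (map w (take i es)) + sum_list (map w (take (j - i) (drop i es)))"
    by simp
  moreover have "0 \<le> sum_list (map w (take (j - i) (drop i es)))"
    using nn unfolding es_def
    by (intro sum_list_nonneg) (auto dest: in_set_takeD in_set_dropD)
  ultimately show ?thesis by (simp add: walk_weight_def edges_of_take es_def)
qed

lemma prefix_weight_step:
  assumes "Suc i < length xs"
  shows "walk_weight w (take (Suc (Suc i)) xs) = walk_weight w (take (Suc i) xs) + w {xs ! i, xs ! Suc i}"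
proof -
  have "i < length (edges_of xs)" using assms by (simp add: length_edges_of)
  then have "take (Suc i) (edges_of xs) = take i (edges_of xs) @ [edges_of xs ! i]"
    by (simp add: take_Suc_conv_app_nth)
  then show ?thesis using nth_edges_of[OF assms]
    by (simp add: walk_weight_def edges_of_take)
qed

lemma conflict_bound:
  assumes sp: "shortest_path V E w xs s t"
    and ij: "i \<le> j" "j < length xs" and u: "u \<in> V" "{xs ! i, u} \<in> E" "{xs ! j, u} \<in> E"
  shows "walk_weight w (take (Suc j) xs) - walk_weight w (take (Suc i) xs) \<le> w {xs ! i, u} + w {xs ! j, u}"
proof -
  have wk: "walk_from_to V E xs s t" and eq: "ereal (walk_weight w xs) = dist V E w s t"
    using sp by (auto simp: shortest_path_def)
  define q where "q = take (Suc i) xs @ u # drop j xs"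
  have dj: "drop j xs = xs ! j # drop (Suc j) xs" using ij by (simp add: Cons_nth_drop_Suc)
  have i_lt: "i < length xs" using ij by simp
  have lt: "last (take (Suc i) xs) = xs ! i" using i_lt by (rule last_take_Suc)
  have tne: "take (Suc i) xs \<noteq> []" using i_lt by auto
  have eq_q: "edges_of q = edges_of (take (Suc i) xs) @ {xs ! i, u} # {u, xs ! j} # edges_of (drop j xs)"
    unfolding q_def using edges_of_append_Cons[OF tne, of u "drop j xs"] lt dj by simp
  have wq: "walk_weight w q = walk_weight w (take (Suc i) xs) + w {xs ! i, u} + w {xs ! j, u} + walk_weight w (drop j xs)"
    unfolding walk_weight_def eq_q by (simp add: insert_commute)
  have "walk_from_to V E q s t"
  proof -
    have w0: "walk V E xs" "hd xs = s" "last xs = t" using wk by (auto simp: walk_from_to_def)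
    have "set q \<subseteq> V" using w0(1) u(1) unfolding q_def walk_def
      by (metis Un_least append_take_drop_id insert_subset le_sup_iff set_append set_simps(2) set_take_subset)
    moreover have "set (edges_of q) \<subseteq> E"
    proof -
      have "set (edges_of (take (Suc i) xs)) \<subseteq> E" "set (edges_of (drop j xs)) \<subseteq> E"
        using w0(1) unfolding walk_def edges_of_take edges_of_drop
        by (meson order_trans set_take_subset set_drop_subset)+
      moreover have "{u, xs ! j} = {xs ! j, u}" by auto
      ultimately show ?thesis unfolding eq_q using u by simp
    qed
    moreover have "hd q = s" using w0 tne unfolding q_def by simp
    moreover have "last q = t"
    proof -
      have "last q = last (drop j xs)" unfolding q_def using dj by simp
      also have "\<dots> = last xs" using ij by simp
      finally show ?thesis using w0 by simp
    qed
    ultimately show ?thesis by (auto simp: walk_from_to_def walk_def q_def)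
  qed
  then have "dist V E w s t \<le> ereal (walk_weight w q)" by (rule dist_le_walk)
  then have "ereal (walk_weight w xs) \<le> ereal (walk_weight w q)" using eq by simp
  then have "walk_weight w xs \<le> walk_weight w q" by simp
  moreover have "walk_weight w xs = walk_weight w (take (Suc j) xs) + walk_weight w (drop j xs)"
    using ij by (intro walk_weight_take_drop) simp
  ultimately show ?thesis using wq by linarith
qed

lemma detour_bound:
  assumes sp: "shortest_path V E w xs s t"
    and i: "i < length xs" and x: "x \<in> V" "{xs ! i, x} \<in> E"
    and spt: "is_spt V E w x T" and TH: "T \<subseteq> H"
  shows "dist V H w s t \<le> ereal (walk_weight w xs + 2 * w {xs ! i, x})"
proof -
  have wk: "walk_from_to V E xs s t" using sp by (auto simp: shortest_path_def)
  have w0: "walk V E xs" "hd xs = s" "last xs = t" using wk by (auto simp: walk_from_to_def)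
  have sV: "s \<in> V" "t \<in> V" using w0 by (auto simp: walk_def)
  have xe: "{x, xs ! i} = {xs ! i, x}" by auto
  define a where "a = walk_weight w (take (Suc i) xs)"
  define b where "b = walk_weight w (drop i xs)"
  define c where "c = w {xs ! i, x}"
  have ab: "walk_weight w xs = a + b" unfolding a_def b_def using i by (rule walk_weight_take_drop)
  have wt: "walk_from_to V E (take (Suc i) xs) s (xs ! i)" using walk_take[OF w0(1) i] w0 by simp
  have wd: "walk_from_to V E (drop i xs) (xs ! i) t" using walk_drop[OF w0(1) i] w0 by simp
  have xw: "walk_from_to V E [x, xs ! i] x (xs ! i)" using x sV i w0
    by (auto simp: walk_from_to_def walk_def xe)
  have wxw: "walk_weight w [x, xs ! i] = c" by (simp add: walk_weight_def c_def xe)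
  have ne: "take (Suc i) xs \<noteq> []" "drop i xs \<noteq> []" using i by auto
  define q1 where "q1 = [x, xs ! i] @ tl (rev (take (Suc i) xs))"
  define q2 where "q2 = [x, xs ! i] @ tl (drop i xs)"
  have q1w: "walk_from_to V E q1 x s"
    unfolding q1_def by (rule walk_from_to_append_tl[OF xw walk_from_to_rev[OF wt]])
  have q2w: "walk_from_to V E q2 x t"
    unfolding q2_def by (rule walk_from_to_append_tl[OF xw wd])
  have "last [x, xs ! i] = hd (rev (take (Suc i) xs))"
    using i by (simp add: hd_rev last_take_Suc)
  then have q1weight: "walk_weight w q1 = c + a"
    unfolding q1_def a_def using walk_weight_append_tl[of "[x, xs ! i]" "rev (take (Suc i) xs)" w] ne wxw
    by (simp add: walk_weight_rev)
  have "last [x, xs ! i] = hd (drop i xs)"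
    using i by (simp add: hd_drop_conv_nth)
  then have q2weight: "walk_weight w q2 = c + b"
    unfolding q2_def b_def using walk_weight_append_tl[of "[x, xs ! i]" "drop i xs" w] ne wxw
    by simp
  have dT1: "dist V T w x s \<le> ereal (c + a)"
    using spt sV dist_le_walk[OF q1w, of w] q1weight by (simp add: is_spt_def)
  have dT2: "dist V T w x t \<le> ereal (c + b)"
    using spt sV dist_le_walk[OF q2w, of w] q2weight by (simp add: is_spt_def)
  show ?thesis
  proof (rule ereal_le_epsilon2)
    fix e :: real assume e: "0 < e"
    have "ereal (c + a) < ereal (c + a + e/2)" using e by simp
    with dT1 have "dist V T w x s < ereal (c + a + e/2)" by (rule le_less_trans)
    then obtain r1 where r1: "walk_from_to V T r1 x s" "walk_weight w r1 < c + a + e/2"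
      by (rule dist_lessE)
    have "ereal (c + b) < ereal (c + b + e/2)" using e by simp
    with dT2 have "dist V T w x t < ereal (c + b + e/2)" by (rule le_less_trans)
    then obtain r2 where r2: "walk_from_to V T r2 x t" "walk_weight w r2 < c + b + e/2"
      by (rule dist_lessE)
    have r1H: "walk_from_to V H r1 x s" "walk_from_to V H r2 x t"
      using r1 r2 walk_mono[OF TH] by (auto simp: walk_from_to_def)
    have pw: "walk_from_to V H (rev r1 @ tl r2) s t"
      by (rule walk_from_to_append_tl[OF walk_from_to_rev[OF r1H(1)] r1H(2)])
    have ne2: "rev r1 \<noteq> []" "r2 \<noteq> []" using r1H by (auto simp: walk_from_to_def walk_def)
    have "last (rev r1) = hd r2" using r1H by (auto simp: walk_from_to_def last_rev)
    then have "walk_weight w (rev r1 @ tl r2) = walk_weight w r1 + walk_weight w r2"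
      using walk_weight_append_tl[OF ne2] by (simp add: walk_weight_rev)
    then have "dist V H w s t \<le> ereal (walk_weight w r1 + walk_weight w r2)"
      using dist_le_walk[OF pw, of w] by simp
    also have "\<dots> \<le> ereal (walk_weight w xs + 2 * c + e)"
      using r1 r2 ab by simp
    finally show "dist V H w s t \<le> ereal (walk_weight w xs + 2 * w {xs ! i, x}) + ereal e"
      by (simp add: c_def)
  qed
qed

lemma prob_avoid:
  assumes fin: "finite V" and UV: "U \<subseteq> V" and p: "0 \<le> p" "p \<le> 1"
  shows "measure_pmf.prob (sample_set V p) {S. S \<inter> U = {}} = (1 - p) ^ card U"
proof -
  define B where "B = (\<lambda>x. if x \<in> U then {False} else (UNIV :: bool set))"
  have pre: "(\<lambda>f. {x \<in> V. f x}) -` {S. S \<inter> U = {}} = Pi V B"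
    using UV by (auto simp: B_def Pi_def)
  have "measure_pmf.prob (sample_set V p) {S. S \<inter> U = {}}
        = measure_pmf.prob (Pi_pmf V False (\<lambda>_. bernoulli_pmf p)) (Pi V B)"
    unfolding sample_set_def measure_map_pmf pre by (rule refl)
  also have "\<dots> = (\<Prod>x\<in>V. measure_pmf.prob (bernoulli_pmf p) (B x))"
    using fin by (rule measure_Pi_pmf_Pi)
  also have "\<dots> = (\<Prod>x\<in>V. if x \<in> U then 1 - p else 1)"
    using p by (intro prod.cong) (auto simp: B_def measure_pmf_single)
  also have "\<dots> = (1 - p) ^ card (V \<inter> U)"
    using fin by (simp add: prod.If_cases)
  also have "V \<inter> U = U" using UV by auto
  finally show ?thesis .
qed

lemma prob_pair_fst_ge:
  assumes "\<And>S1 S2. S1 \<in> X \<Longrightarrow> (S1, S2) \<in> Y"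
  shows "measure_pmf.prob A X \<le> measure_pmf.prob (pair_pmf A B) Y"
proof -
  have "measure_pmf.prob A X = measure_pmf.prob (map_pmf fst (pair_pmf A B)) X"
    by (simp add: map_fst_pair_pmf)
  also have "\<dots> = measure_pmf.prob (pair_pmf A B) (fst -` X)" by simp
  also have "\<dots> \<le> measure_pmf.prob (pair_pmf A B) Y"
    using assms by (intro measure_pmf.finite_measure_mono) auto
  finally show ?thesis .
qed

lemma mu_bound:
  assumes n: "2 \<le> n"
  shows "real n ^ 2 * log 2 (real n) \<le> real (mu n) ^ 5" and "1 \<le> mu n"
proof -
  define y where "y = real n powr (2/5) * (log 2 (real n)) powr (1/5)"
  have l1: "1 \<le> log 2 (real n)" using n by simp
  have a1: "1 \<le> real n powr (2/5)" using n by (intro ge_one_powr_ge_zero) auto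
  have a2: "1 \<le> log 2 (real n) powr (1/5)" using l1 by (intro ge_one_powr_ge_zero) auto
  have y0: "1 \<le> y" unfolding y_def using mult_mono[OF a1 a2] by simp
  have my: "y \<le> real (mu n)" unfolding mu_def y_def[symmetric] by (rule real_nat_ceiling_ge)
  have "y ^ 5 = (real n powr (2/5)) ^ 5 * (log 2 (real n) powr (1/5)) ^ 5"
    unfolding y_def by (rule power_mult_distrib)
  also have "(real n powr (2/5)) ^ 5 = real n ^ 2"
  proof -
    have "(real n powr (2/5)) ^ 5 = real n powr (real 5 * (2/5))"
      using n by (intro powr_power) auto
    also have "real 5 * (2/5) = (2::real)" by simp
    finally show ?thesis using n by simp
  qed
  also have "(log 2 (real n) powr (1/5)) ^ 5 = log 2 (real n)"
  proof -
    have "(log 2 (real n) powr (1/5)) ^ 5 = log 2 (real n) powr (real 5 * (1/5))"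
      using l1 by (intro powr_power) auto
    also have "real 5 * (1/5) = (1::real)" by simp
    finally show ?thesis using l1 by simp
  qed
  finally have "y ^ 5 = real n ^ 2 * log 2 (real n)" .
  moreover have "y ^ 5 \<le> real (mu n) ^ 5" using my y0 by (intro power_mono) auto
  ultimately show "real n ^ 2 * log 2 (real n) \<le> real (mu n) ^ 5" by simp
  show "1 \<le> mu n" using my y0 by linarith
qed

lemma final_bound:
  fixes N k n :: nat
  assumes n: "2 \<le> n" and k: "real (mu n) ^ 3 / real n < real k" and cU: "k * mu n \<le> 3 * N"
  shows "(1 - min 1 (9 * real (mu n) / real n)) ^ N \<le> 1 / real n ^ 3"
proof -
  define m where "m = real (mu n)"
  have m1: "1 \<le> m" using mu_bound(2)[OF n] by (simp add: m_def)
  have m5: "real n ^ 2 * log 2 (real n) \<le> m ^ 5" using mu_bound(1)[OF n] by (simp add: m_def)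
  have npos: "0 < real n" using n by simp
  have "0 < m ^ 3 / real n" using m1 npos by simp
  then have kpos: "0 < real k" using k unfolding m_def by linarith
  have cU': "real k * m \<le> 3 * real N" using cU unfolding m_def by (metis of_nat_le_iff of_nat_mult of_nat_numeral)
  have "0 < real k * m" using kpos m1 by simp
  then have Npos: "0 < N" using cU' by simp
  show ?thesis
  proof (cases "real n \<le> 9 * m")
    case True
    then have "min 1 (9 * m / real n) = 1" using npos by (simp add: field_simps)
    then have "(1 - min 1 (9 * m / real n)) ^ N = 0" using Npos by (simp add: zero_power)
    moreover have "0 \<le> 1 / real n ^ 3" by simp
    ultimately show ?thesis unfolding m_def by linarith
  next
    case False
    define p where "p = 9 * m / real n"
    have p01: "0 < p" "p < 1" using False npos m1 by (auto simp: p_def field_simps)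
    have mp: "min 1 (9 * m / real n) = p" using p01 by (simp add: p_def)
    have e1: "1 - p \<le> exp (- p)" using exp_ge_add_one_self[of "-p"] by linarith
    have "(1 - p) ^ N \<le> exp (- p) ^ N"
      using p01 e1 by (intro power_mono) auto
    also have "\<dots> = exp (real N * (- p))" by (rule exp_of_nat_mult[symmetric])
    also have "real N * (- p) = - (p * real N)" by simp
    also have "exp (- (p * real N)) \<le> exp (- (3 * ln (real n)))"
    proof -
      have "real k * m / 3 \<le> real N" using cU' by simp
      then have "p * (real k * m / 3) \<le> p * real N" using p01 by (intro mult_left_mono) auto
      then have "p * real N \<ge> 9 * m / real n * (real k * m / 3)" by (simp add: p_def)
      also have "9 * m / real n * (real k * m / 3) = 3 * m ^ 2 * real k / real n"
        by (simp add: power2_eq_square field_simps)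
      also have "3 * m ^ 2 * real k / real n \<ge> 3 * m ^ 2 * (m ^ 3 / real n) / real n"
        using k npos m1 unfolding m_def[symmetric] by (intro divide_right_mono mult_left_mono) auto
      also have "3 * m ^ 2 * (m ^ 3 / real n) / real n = 3 * (m ^ 5 / real n ^ 2)"
        by (simp add: power2_eq_square field_simps numeral_eq_Suc)
      also have "3 * (m ^ 5 / real n ^ 2) \<ge> 3 * log 2 (real n)"
        using m5 npos by (simp add: field_simps)
      finally have A: "3 * log 2 (real n) \<le> p * real N" .
      have "log 2 (real n) \<ge> ln (real n)"
      proof -
        have "0 \<le> ln (real n)" using n by simp
        moreover have "0 < ln (2::real)" "ln (2::real) \<le> 1" by (simp_all add: ln_le_minus_one[of 2, simplified]) 
        ultimately show ?thesis by (simp add: log_def field_simps mult_left_le)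
      qed
      with A show ?thesis by simp
    qed
    also have "exp (- (3 * ln (real n))) = 1 / real n ^ 3"
    proof -
      have "exp (3 * ln (real n)) = exp (real 3 * ln (real n))" by simp
      also have "\<dots> = exp (ln (real n)) ^ 3" by (rule exp_of_nat_mult)
      also have "\<dots> = real n ^ 3" using npos by simp
      finally show ?thesis by (simp add: exp_minus inverse_eq_divide)
    qed
    finally show ?thesis unfolding mp m_def[symmetric] p_def by simp
  qed
qed

lemma finite_edges: "simple_graph V E \<Longrightarrow> finite E"
proof -
  assume g: "simple_graph V E"
  then have "E \<subseteq> Pow V" by (force simp: simple_graph_def)
  moreover have "finite V" using g by (simp add: simple_graph_def)
  ultimately show "finite E" by (meson finite_Pow_iff finite_subset)
qed

lemma edge_two: "simple_graph V E \<Longrightarrow> {v, u} \<in> E \<Longrightarrow> u \<noteq> v \<and> u \<in> V \<and> v \<in> V"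
  unfolding simple_graph_def by (metis doubleton_eq_iff insert_absorb2 insert_iff singleton_insert_inj_eq)

lemma nbhd_facts:
  assumes g: "simple_graph V E"
    and L1: "L \<subseteq> incident E v" and L2: "card L = min K (card (incident E v))"
    and L3: "\<forall>e\<in>L. \<forall>f\<in>incident E v - L. w e \<le> w f"
    and e: "e \<in> E" "v \<in> e" "e \<notin> L"
  shows "card {u. {v, u} \<in> L} = K"
    and "\<And>u. {v, u} \<in> L \<Longrightarrow> w {v, u} \<le> w e \<and> {v, u} \<in> E \<and> u \<in> V"
proof -
  have fin: "finite (incident E v)" using finite_edges[OF g] by (simp add: incident_def)
  have ei: "e \<in> incident E v - L" using e by (simp add: incident_def)
  have "L \<subset> incident E v" using L1 ei by blast
  then have "card L < card (incident E v)" using fin by (simp add: psubset_card_mono)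
  then have cL: "card L = K" using L2 by simp
  have "bij_betw (\<lambda>u. {v, u}) {u. {v, u} \<in> L} L"
  proof (rule bij_betwI')
    fix u u' assume "u \<in> {u. {v, u} \<in> L}" "u' \<in> {u. {v, u} \<in> L}"
    then have "u \<noteq> v" "u' \<noteq> v" using L1 edge_two[OF g] by (auto simp: incident_def)
    then show "({v, u} = {v, u'}) = (u = u')" by (auto simp: doubleton_eq_iff)
  next
    fix u assume "u \<in> {u. {v, u} \<in> L}" then show "{v, u} \<in> L" by simp
  next
    fix f assume f: "f \<in> L"
    then have "f \<in> E" "v \<in> f" using L1 by (auto simp: incident_def)
    then obtain a b where "f = {a, b}" using g by (auto simp: simple_graph_def)
    then have "f = {v, if v = a then b else a}" using \<open>v \<in> f\<close> by auto
    then show "\<exists>u\<in>{u. {v, u} \<in> L}. f = {v, u}" using f by auto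
  qed
  then show "card {u. {v, u} \<in> L} = K" using cL by (simp add: bij_betw_same_card)
  fix u assume u: "{v, u} \<in> L"
  then have "{v, u} \<in> E" using L1 by (auto simp: incident_def)
  moreover have "w {v, u} \<le> w e" using L3 u ei by blast
  ultimately show "w {v, u} \<le> w e \<and> {v, u} \<in> E \<and> u \<in> V" using edge_two[OF g] by blast
qed

lemma double_count:
  assumes fA: "finite A" and fU: "finite U" and sub: "\<And>c. c \<in> A \<Longrightarrow> N c \<subseteq> U"
    and bd: "\<And>u. u \<in> U \<Longrightarrow> card {c \<in> A. u \<in> N c} \<le> 3"
  shows "(\<Sum>c\<in>A. card (N c)) \<le> 3 * card U"
proof -
  have "(\<Sum>c\<in>A. card (N c)) = (\<Sum>c\<in>A. \<Sum>u\<in>U. of_bool (u \<in> N c))"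
  proof (rule sum.cong)
    fix c assume "c \<in> A"
    then have "U \<inter> {u. u \<in> N c} = N c" using sub by auto
    then show "card (N c) = (\<Sum>u\<in>U. of_bool (u \<in> N c))" using fU by simp
  qed simp
  also have "\<dots> = (\<Sum>u\<in>U. \<Sum>c\<in>A. of_bool (u \<in> N c))" by (rule sum.swap)
  also have "\<dots> = (\<Sum>u\<in>U. card {c \<in> A. u \<in> N c})"
  proof (rule sum.cong)
    fix u assume "u \<in> U"
    have "A \<inter> {c. u \<in> N c} = {c \<in> A. u \<in> N c}" by auto
    then show "(\<Sum>c\<in>A. of_bool (u \<in> N c)) = card {c \<in> A. u \<in> N c}" using fA by simp
  qed simp
  also have "\<dots> \<le> (\<Sum>u\<in>U. 3)" using bd by (intro sum_mono) auto
  also have "\<dots> = 3 * card U" by simp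
  finally show ?thesis .
qed

lemma window_card:
  fixes C :: "nat set"
  assumes fin: "finite C" and win: "\<And>c d. c \<in> C \<Longrightarrow> d \<in> C \<Longrightarrow> c < d \<Longrightarrow> d < c + 3"
  shows "card C \<le> 3"
proof (cases "C = {}")
  case True then show ?thesis by simp
next
  case False
  define c0 where "c0 = Min C"
  have c0: "c0 \<in> C" "\<And>d. d \<in> C \<Longrightarrow> c0 \<le> d" using fin False by (auto simp: c0_def)
  have "C \<subseteq> {c0..<c0 + 3}"
  proof
    fix d assume d: "d \<in> C"
    show "d \<in> {c0..<c0 + 3}"
    proof (cases "d = c0")
      case True then show ?thesis by simp
    next
      case False
      then have "c0 < d" using c0(2)[OF d] by simp
      then show ?thesis using win[OF c0(1) d] by simp
    qed
  qed
  then have "card C \<le> card {c0..<c0 + 3}" by (intro card_mono) auto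
  then show ?thesis by simp
qed

theorem lemma12:
  fixes V :: "'a set" and E :: "'a set set" and w :: "'a set \<Rightarrow> real" and eps :: real
    and E0 :: "'a set set" and cp :: "'a \<Rightarrow> 'a \<Rightarrow> 'a list"
    and spt :: "'a \<Rightarrow> 'a set set" and sol :: "'a set set \<Rightarrow> 'a \<Rightarrow> 'a \<Rightarrow> 'a list"
    and s t :: 'a
  defines "n \<equiv> card V"
  assumes graph: "simple_graph V E" and conn: "connected_graph V E"
    and wpos: "\<forall>e\<in>E. w e > 0"
    and eps: "0 < eps" "eps < 1"
    and H0: "lightweight_init V E w (mu n) E0"
    and canon: "\<forall>u\<in>V. \<forall>v\<in>V. shortest_path V E w (cp u v) u v"
    and spt: "\<forall>x\<in>V. is_spt V E w x (spt x)"
    and sol: "\<forall>Eg x1. Eg \<subseteq> E \<longrightarrow> x1 \<in> V \<longrightarrow>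
               weak_csssp_sol V E w cp Eg x1 eps (real (mu n) ^ 3 / real n + 2) (sol Eg x1)"
    and st: "s \<in> V" "t \<in> V"
    and missing: "real (length (filter (\<lambda>e. e \<notin> E0) (edges_of (cp s t)))) > real (mu n) ^ 3 / real n"
  shows "measure_pmf.prob
           (pair_pmf (sample_set V (min 1 (9 * real (mu n) / real n))) (sample_set V (1 / real (mu n))))
           {(S1, S2). dist V (H_edges V E E0 spt sol S1 S2) w s t
                        \<le> dist V E w s t + ereal (4 * Wpath w (cp s t))}
         \<ge> 1 - 1 / real n ^ 3"
proof -
  define xs where "xs = cp s t"
  have sp: "shortest_path V E w xs s t" using canon st by (simp add: xs_def)
  have wk: "walk_from_to V E xs s t" and dst: "dist V E w s t = ereal (walk_weight w xs)"
    using sp by (auto simp: shortest_path_def)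
  have w0: "walk V E xs" "hd xs = s" "last xs = t" using wk by (auto simp: walk_from_to_def)
  define es where "es = edges_of xs"
  have les: "length es = length xs - 1" by (simp add: es_def length_edges_of)
  have esE: "set es \<subseteq> E" using w0 by (simp add: walk_def es_def)
  have finV: "finite V" using graph by (simp add: simple_graph_def)
  define Mi where "Mi = {i. i < length es \<and> es ! i \<notin> E0}"
  define k where "k = card Mi"
  have kmiss: "real (mu n) ^ 3 / real n < real k"
    using missing unfolding k_def Mi_def es_def xs_def[symmetric] by (simp add: length_filter_conv_card)
  have "0 \<le> real (mu n) ^ 3 / real n" by simp
  then have "0 < real k" using kmiss by linarith
  then have k1: "0 < k" by simp
  have finMi: "finite Mi" by (simp add: Mi_def)
  define ms where "ms = sorted_list_of_set Mi"
  define m where "m = (\<lambda>c. ms ! c)"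
  have lms: "length ms = k" by (simp add: ms_def k_def)
  have mMi: "\<And>c. c < k \<Longrightarrow> m c \<in> Mi"
    using lms finMi by (metis m_def ms_def nth_mem set_sorted_list_of_set)
  have sm: "\<And>c d. c < d \<Longrightarrow> d < k \<Longrightarrow> m c < m d"
    unfolding m_def using lms by (metis ms_def sorted_wrt_nth_less strict_sorted_list_of_set)
  have mlt: "Suc (m c) < length xs" if "c < k" for c
  proof -
    have "m c < length es" using mMi[OF that] by (simp add: Mi_def)
    then show ?thesis using les by linarith
  qed
  have mnot: "\<And>c. c < k \<Longrightarrow> es ! m c \<notin> E0" using mMi by (auto simp: Mi_def)
  have mes: "\<And>c. c < k \<Longrightarrow> es ! m c = {xs ! m c, xs ! Suc (m c)}"
    using mlt by (simp add: es_def nth_edges_of)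
  have mE: "\<And>c. c < k \<Longrightarrow> es ! m c \<in> E \<and> es ! m c \<in> set es"
    using mMi esE by (auto simp: Mi_def)
  have n2: "2 \<le> n"
  proof -
    have "es ! m 0 \<in> E" using mE k1 by blast
    then obtain a b where "es ! m 0 = {a, b}" "a \<noteq> b" "a \<in> V" "b \<in> V"
      using graph by (auto simp: simple_graph_def)
    then have "{a, b} \<subseteq> V" "card {a, b} = 2" by auto
    then show ?thesis unfolding n_def using finV by (metis card_mono)
  qed
  define P where "P = (\<lambda>i. walk_weight w (take (Suc i) xs))"
  have nn: "\<forall>e\<in>set (edges_of xs). 0 \<le> w e" using esE wpos es_def by fastforce
  have Pmono: "\<And>i j. i \<le> j \<Longrightarrow> P i \<le> P j" unfolding P_def using nn by (rule prefix_weight_mono)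
  define om where "om = (\<lambda>i. P (Suc i) - P i)"
  have omw: "\<And>c. c < k \<Longrightarrow> om (m c) = w (es ! m c)"
    using mlt mes unfolding om_def P_def by (simp add: prefix_weight_step)
  have Ppos: "\<And>c. c < k \<Longrightarrow> P (m c) < P (Suc (m c))"
    using omw mE wpos unfolding om_def by fastforce
  define f where "f = (\<lambda>c. if c = k - 1 \<or> om (m c) \<le> om (m (Suc c)) then Suc (m c) else m (Suc c))"
  define R where "R = (\<lambda>c. if c = k - 1 \<or> om (m c) \<le> om (m (Suc c)) then om (m c) else om (m (Suc c)))"
  have fR: "\<And>c. c < k \<Longrightarrow> f c < length xs \<and> (\<exists>e. e \<in> E \<and> e \<notin> E0 \<and> xs ! f c \<in> e \<and> w e = R c \<and> e \<in> set es)"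
  proof -
    fix c assume c: "c < k"
    show "f c < length xs \<and> (\<exists>e. e \<in> E \<and> e \<notin> E0 \<and> xs ! f c \<in> e \<and> w e = R c \<and> e \<in> set es)"
    proof (cases "c = k - 1 \<or> om (m c) \<le> om (m (Suc c))")
      case True
      then show ?thesis using c mlt[OF c] mes[OF c] mE[OF c] mnot[OF c] omw[OF c]
        by (auto simp: f_def R_def intro!: exI[of _ "es ! m c"])
    next
      case False
      then have c1: "Suc c < k" using c by auto
      then show ?thesis using False mlt[OF c1] mes[OF c1] mE[OF c1] mnot[OF c1] omw[OF c1]
        by (auto simp: f_def R_def intro!: exI[of _ "es ! m (Suc c)"])
    qed
  qed
  obtain L where L: "\<forall>v\<in>V. L v \<subseteq> incident E v \<and> card (L v) = min (mu n) (card (incident E v)) \<and>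
                 (\<forall>e\<in>L v. \<forall>f\<in>incident E v - L v. w e \<le> w f)" and E0L: "E0 = (\<Union>v\<in>V. L v)"
    using H0 unfolding lightweight_init_def by blast
  define N where "N = (\<lambda>c. {u. {xs ! f c, u} \<in> L (xs ! f c)})"
  have xsV: "\<And>i. i < length xs \<Longrightarrow> xs ! i \<in> V" using w0 by (auto simp: walk_def)
  have Nfacts: "\<And>c. c < k \<Longrightarrow> card (N c) = mu n \<and> (\<forall>u\<in>N c. w {xs ! f c, u} \<le> R c \<and> {xs ! f c, u} \<in> E \<and> u \<in> V)"
  proof -
    fix c assume c: "c < k"
    obtain e where e: "e \<in> E" "e \<notin> E0" "xs ! f c \<in> e" "w e = R c" using fR[OF c] by blast
    have v: "xs ! f c \<in> V" using fR[OF c] xsV by blast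
    have eL: "e \<notin> L (xs ! f c)" using e(2) v E0L by blast
    have Lv: "L (xs ! f c) \<subseteq> incident E (xs ! f c)" "card (L (xs ! f c)) = min (mu n) (card (incident E (xs ! f c)))"
       "\<forall>e\<in>L (xs ! f c). \<forall>f\<in>incident E (xs ! f c) - L (xs ! f c). w e \<le> w f"
      using L v by auto
    show "card (N c) = mu n \<and> (\<forall>u\<in>N c. w {xs ! f c, u} \<le> R c \<and> {xs ! f c, u} \<in> E \<and> u \<in> V)"
      using nbhd_facts[OF graph Lv e(1) e(3) eL] e(4) unfolding N_def by auto
  qed
  have win: "\<And>u c d. c < k \<Longrightarrow> d < k \<Longrightarrow> u \<in> N c \<Longrightarrow> u \<in> N d \<Longrightarrow> c < d \<Longrightarrow> d < c + 3"
  proof (rule ccontr)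
    fix u c d assume c: "c < k" and d: "d < k" and uc: "u \<in> N c" and ud: "u \<in> N d" and cd: "c < d"
      and nw: "\<not> d < c + 3"
    have big: "R c + R d < P (f d) - P (f c)"
      by (rule comb_main[of P k m om f R c d]) (use Pmono sm Ppos nw d in \<open>auto simp: om_def f_def R_def\<close>)
    have Rpos: "0 \<le> R c" "0 \<le> R d" using fR[OF c] fR[OF d] wpos by (auto simp: less_imp_le)
    have "f c \<le> f d"
    proof (rule ccontr)
      assume "\<not> f c \<le> f d"
      then have "P (f d) \<le> P (f c)" using Pmono by simp
      then show False using big Rpos by linarith
    qed
    have u1: "w {xs ! f c, u} \<le> R c" "{xs ! f c, u} \<in> E" "u \<in> V" using Nfacts[OF c] uc by auto
    have u2: "w {xs ! f d, u} \<le> R d" "{xs ! f d, u} \<in> E" using Nfacts[OF d] ud by auto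
    have "P (f d) - P (f c) \<le> w {xs ! f c, u} + w {xs ! f d, u}"
      unfolding P_def by (rule conflict_bound[OF sp \<open>f c \<le> f d\<close>]) (use fR[OF d] u1 u2 in auto)
    then show False using big u1 u2 by linarith
  qed
  define U where "U = (\<Union>c\<in>{..<k}. N c)"
  have UV: "U \<subseteq> V" using Nfacts by (auto simp: U_def)
  have finU: "finite U" using UV finV by (rule finite_subset)
  have cnt: "k * mu n \<le> 3 * card U"
  proof -
    have "(\<Sum>c\<in>{..<k}. card (N c)) \<le> 3 * card U"
    proof (rule double_count)
      fix u assume "u \<in> U"
      show "card {c \<in> {..<k}. u \<in> N c} \<le> 3"
        by (rule window_card) (use win in auto)
    qed (use finU in \<open>auto simp: U_def\<close>)
    moreover have "(\<Sum>c\<in>{..<k}. card (N c)) = k * mu n" using Nfacts by simp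
    ultimately show ?thesis by simp
  qed
  define p1 where "p1 = min 1 (9 * real (mu n) / real n)"
  have p1: "0 \<le> p1" "p1 \<le> 1" by (auto simp: p1_def)
  have Wp: "\<And>e. e \<in> set es \<Longrightarrow> w e \<le> Wpath w xs"
    unfolding Wpath_def es_def by (intro Max_ge) auto
  have good: "(S1, S2) \<in> {(S1, S2). dist V (H_edges V E E0 spt sol S1 S2) w s t
                        \<le> dist V E w s t + ereal (4 * Wpath w (cp s t))}"
    if S1: "S1 \<in> {S. \<not> (S \<inter> U = {})}" for S1 S2
  proof -
    obtain x where x: "x \<in> S1" "x \<in> U" using S1 by blast
    then obtain c where c: "c < k" "x \<in> N c" by (auto simp: U_def)
    have xf: "w {xs ! f c, x} \<le> R c" "{xs ! f c, x} \<in> E" "x \<in> V" using Nfacts[OF c(1)] c(2) by auto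
    obtain e where e: "w e = R c" "e \<in> set es" using fR[OF c(1)] by blast
    have RW: "R c \<le> Wpath w xs" using Wp e by metis
    have Rp: "0 \<le> R c" using xf wpos by (meson less_imp_le order_trans)
    have sub: "spt x \<subseteq> H_edges V E E0 spt sol S1 S2"
      using x(1) unfolding H_edges_def H_edges2_def Let_def by blast
    have "dist V (H_edges V E E0 spt sol S1 S2) w s t \<le> ereal (walk_weight w xs + 2 * w {xs ! f c, x})"
      by (rule detour_bound[OF sp _ xf(3) xf(2) _ sub]) (use fR[OF c(1)] spt xf(3) in auto)
    also have "\<dots> \<le> ereal (walk_weight w xs + 4 * Wpath w xs)" using xf(1) RW Rp by simp
    also have "\<dots> = dist V E w s t + ereal (4 * Wpath w (cp s t))" using dst by (simp add: xs_def)
    finally show ?thesis by simp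
  qed
  have "measure_pmf.prob (sample_set V p1) {S. \<not> (S \<inter> U = {})}
        \<le> measure_pmf.prob (pair_pmf (sample_set V p1) (sample_set V (1 / real (mu n))))
           {(S1, S2). dist V (H_edges V E E0 spt sol S1 S2) w s t
                        \<le> dist V E w s t + ereal (4 * Wpath w (cp s t))}"
    by (rule prob_pair_fst_ge) (rule good)
  moreover have "measure_pmf.prob (sample_set V p1) {S. \<not> (S \<inter> U = {})} = 1 - (1 - p1) ^ card U"
  proof -
    have "{S. \<not> (S \<inter> U = {})} = space (measure_pmf (sample_set V p1)) - {S. S \<inter> U = {}}" by auto
    moreover have "measure_pmf.prob (sample_set V p1) (space (measure_pmf (sample_set V p1)) - {S. S \<inter> U = {}})
       = 1 - measure_pmf.prob (sample_set V p1) {S. S \<inter> U = {}}"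
      by (rule measure_pmf.prob_compl) simp
    ultimately show ?thesis using prob_avoid[OF finV UV p1] by simp
  qed
  moreover have "(1 - p1) ^ card U \<le> 1 / real n ^ 3"
    unfolding p1_def by (rule final_bound[OF n2 kmiss cnt])
  ultimately show ?thesis unfolding p1_def by linarith
qed

end
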